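(* Suppose $Y=X\beta^*\in\mathbb{R}$, where $X\in\mathbb{R}^{1\times p}$ is a jointly continuous random vector and, for every $i\in[p]$, $\beta_i^*\in\mathcal{S}=\{a_1,\dots,a_{\mathcal{R}}\}$, where $\mathcal{S}$ is a rationally independent set known to the learner. Then the IHDR algorithm with input $(Y,\mathcal{S},X)$ terminates with $\hat\beta^*=\beta^*$ with probability $1$, after at most polynomial in $p$ and $\mathcal{R}$ arithmetic operations on real numbers.
   Context: A random vector $X\in\mathbb{R}^p$ is jointly continuous if it has a joint density with respect to Lebesgue measure on $\mathbb{R}^p$. A finite set $\{a_1,\dots,a_k\}\subset\mathbb{R}$ is rationally independent if $\sum q_ia_i=0$ with $q_i\in\mathbb{Q}$ implies all $q_i=0$. An integer relation for $b\in\mathbb{R}^k$ is a nonzero $m\in\mathbb{Z}^k$ with $\langle b,m\rangle=0$. IRA (integer relation algorithm, e.g. PSLQ): given $b\in\mathbb{R}^k$ admitting an integer relation, it outputs an integer relation for $b$ after $O(k^3+k^2\log\|m\|)$ arithmetic operations on reals, where $m$ is an integer relation of smallest Euclidean norm. IHDR algorithm on input $(Y,\mathcal{S},X)$: (1) form $\mathcal{L}=(X_ia_j:i\in[p],j\in[\mathcal{R}])$; (2) run IRA on $(Y,\mathcal{L})$, with output $(b_0,b_{ij}:i\in[p],j\in[\mathcal{R}])$ ($b_0$ the coefficient of $Y$, $b_{ij}$ that of $X_ia_j$); (3) if $b_0=0$ output $\hat\beta^*=0$; (4) otherwise, for each $i\in[p]$ set $\hat\beta^*_i=a_{j(i)}$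 where $j(i)$ is the smallest $j\in[\mathcal{R}]$ with $b_{ij}\neq0$; output $\hat\beta^*$. *)

theory Defs
  imports "HOL-Probability.Probability"
begin

text \<open>Finite families are indexed by natural numbers: a vector in R^k is a function
  nat => real of which only the entries at indices < k matter.\<close>

definition rationally_independent :: "(nat \<Rightarrow> real) \<Rightarrow> nat \<Rightarrow> bool" where
  "rationally_independent a R \<longleftrightarrow>
     (\<forall>q :: nat \<Rightarrow> real. (\<forall>j<R. q j \<in> \<rat>) \<and> (\<Sum>j<R. q j * a j) = 0 \<longrightarrow> (\<forall>j<R. q j = 0))"

definition is_int_relation :: "(nat \<Rightarrow> real) \<Rightarrow> nat \<Rightarrow> (nat \<Rightarrow> int) \<Rightarrow> bool" where
  "is_int_relation b k m \<longleftrightarrow> (\<exists>i<k. m i \<noteq> 0) \<and> (\<Sum>i<k. of_int (m i) * b i) = 0"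

definition has_int_relation :: "(nat \<Rightarrow> real) \<Rightarrow> nat \<Rightarrow> bool" where
  "has_int_relation b k \<longleftrightarrow> (\<exists>m. is_int_relation b k m)"

definition min_relation_norm :: "(nat \<Rightarrow> real) \<Rightarrow> nat \<Rightarrow> real" where
  "min_relation_norm b k = Inf {sqrt (\<Sum>i<k. (of_int (m i))\<^sup>2) | m. is_int_relation b k m}"

text \<open>Specification of an integer relation algorithm (e.g. PSLQ): an output function and a
  count of arithmetic operations on reals, with a constant C from the O-bound.\<close>
definition is_IRA :: "((nat \<Rightarrow> real) \<Rightarrow> nat \<Rightarrow> (nat \<Rightarrow> int)) \<Rightarrow>
                      ((nat \<Rightarrow> real) \<Rightarrow> nat \<Rightarrow> real) \<Rightarrow> real \<Rightarrow> bool" where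
  "is_IRA ira ira_cost C \<longleftrightarrow>
     (\<forall>b k. has_int_relation b k \<longrightarrow>
        is_int_relation b k (ira b k) \<and>
        ira_cost b k \<le> C * (real k ^ 3 + (real k)\<^sup>2 * ln (min_relation_norm b k)))"

text \<open>Step (1): the input vector (Y, X_i a_j) of length p*R+1; entry 0 is Y and
  entry 1 + i*R + j is X_i a_j (i < p, j < R).\<close>
definition ihdr_input :: "nat \<Rightarrow> nat \<Rightarrow> (nat \<Rightarrow> real) \<Rightarrow> real \<Rightarrow> (nat \<Rightarrow> real) \<Rightarrow> nat \<Rightarrow> real" where
  "ihdr_input p R a y x n =
     (if n = 0 then y else x ((n - 1) div R) * a ((n - 1) mod R))"

definition ihdr_decode :: "nat \<Rightarrow> (nat \<Rightarrow> real) \<Rightarrow> (nat \<Rightarrow> int) \<Rightarrow> nat \<Rightarrow> real" where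
  "ihdr_decode R a b i =
     (if b 0 = 0 then 0 else a (LEAST j. j < R \<and> b (1 + i * R + j) \<noteq> 0))"

definition ihdr :: "((nat \<Rightarrow> real) \<Rightarrow> nat \<Rightarrow> (nat \<Rightarrow> int)) \<Rightarrow>
     nat \<Rightarrow> nat \<Rightarrow> (nat \<Rightarrow> real) \<Rightarrow> real \<Rightarrow> (nat \<Rightarrow> real) \<Rightarrow> nat \<Rightarrow> real" where
  "ihdr ira p R a y x = ihdr_decode R a (ira (ihdr_input p R a y x) (p * R + 1))"

text \<open>Number of arithmetic operations on reals: p*R products to form L, the IRA run,
  and at most p*R further steps in the decoding.\<close>
definition ihdr_cost :: "((nat \<Rightarrow> real) \<Rightarrow> nat \<Rightarrow> real) \<Rightarrow>
     nat \<Rightarrow> nat \<Rightarrow> (nat \<Rightarrow> real) \<Rightarrow> real \<Rightarrow> (nat \<Rightarrow> real) \<Rightarrow> real" where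
  "ihdr_cost ira_cost p R a y x =
     real (p * R) + ira_cost (ihdr_input p R a y x) (p * R + 1) + real (p * R)"

end

theory Submission
  imports Defs
begin

lemma hyperplane_null:
  fixes c :: "nat \<Rightarrow> real" and p i0 :: nat
  assumes "i0 < p" "c i0 \<noteq> 0"
  shows "emeasure (PiM {..<p} (\<lambda>_. lborel))
           {x \<in> space (PiM {..<p} (\<lambda>_. lborel)). (\<Sum>i<p. x i * c i) = 0} = 0"
proof -
  let ?N = "PiM {..<p} (\<lambda>_. lborel :: real measure)"
  let ?I = "{..<p} - {i0}"
  have ins: "insert i0 ?I = {..<p}" using assms(1) by auto
  interpret product_sigma_finite "\<lambda>_. lborel :: real measure" by standard
  define H where "H = {x \<in> space ?N. (\<Sum>i<p. x i * c i) = 0}"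
  have Hm: "H \<in> sets ?N" unfolding H_def by measurable
  have "emeasure ?N H = (\<integral>\<^sup>+ x. indicator H x \<partial>?N)"
    using Hm by simp
  also have "\<dots> = (\<integral>\<^sup>+ x. (\<integral>\<^sup>+ y. indicator H (x(i0 := y)) \<partial>lborel) \<partial>(PiM ?I (\<lambda>_. lborel)))"
    using product_nn_integral_insert[of ?I i0 "indicator H"] Hm ins by simp
  also have "\<dots> = 0"
  proof -
    have inner: "(\<integral>\<^sup>+ y. indicator H (x(i0 := y)) \<partial>lborel) = 0" for x :: "nat \<Rightarrow> real"
    proof -
      define v where "v = - (\<Sum>i\<in>?I. x i * c i) / c i0"
      have le: "indicator H (x(i0 := y)) \<le> (indicator {v} y :: ennreal)" for y
      proof (cases "x(i0 := y) \<in> H")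
        case True
        then have "(\<Sum>i<p. (x(i0 := y)) i * c i) = 0" unfolding H_def by simp
        moreover have "(\<Sum>i<p. (x(i0 := y)) i * c i) = y * c i0 + (\<Sum>i\<in>?I. x i * c i)"
          using assms(1) by (simp add: sum.remove[of "{..<p}" i0])
        ultimately have "y = v" unfolding v_def using assms(2) by (simp add: field_simps)
        then show ?thesis using True by simp
      qed simp
      have "(\<integral>\<^sup>+ y. indicator H (x(i0 := y)) \<partial>lborel) \<le> (\<integral>\<^sup>+ y. indicator {v} y \<partial>lborel)"
        by (rule nn_integral_mono) (rule le)
      also have "\<dots> = 0" by simp
      finally show ?thesis by simp
    qed
    show ?thesis by (simp add: inner)
  qed
  finally show ?thesis unfolding H_def by simp
qed


lemma sum_prod_index:
  fixes g :: "nat \<Rightarrow> 'b::comm_monoid_add"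
  shows "(\<Sum>n<p*R. g n) = (\<Sum>i<p. \<Sum>j<R. g (i*R+j))"
proof (induction p)
  case 0 then show ?case by simp
next
  case (Suc p)
  have "(\<Sum>n<Suc p * R. g n) = (\<Sum>n<p*R. g n) + (\<Sum>n\<in>{p*R..<p*R+R}. g n)"
    by (simp add: add.commute sum.atLeastLessThan_concat[symmetric] lessThan_atLeast0)
  also have "(\<Sum>n\<in>{p*R..<p*R+R}. g n) = (\<Sum>j<R. g (p*R+j))"
  proof -
    have "(\<Sum>n\<in>{0+p*R..<R+p*R}. g n) = (\<Sum>j\<in>{0..<R}. g (j+p*R))"
      by (rule sum.shift_bounds_nat_ivl)
    then show ?thesis by (simp add: lessThan_atLeast0 add.commute)
  qed
  finally show ?case using Suc by simp
qed

lemma idx_lt: "i < p \<Longrightarrow> j < (R::nat) \<Longrightarrow> i*R+j < p*R"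
proof -
  assume "i < p" "j < R"
  then have "i*R+j < i*R+R" by simp
  also have "\<dots> = Suc i * R" by simp
  also have "\<dots> \<le> p * R" using \<open>i<p\<close> by (intro mult_right_mono) auto
  finally show ?thesis .
qed

lemma input_sum:
  "(\<Sum>n<p*R+1. of_int (m n) * ihdr_input p R a y x n)
     = of_int (m 0) * y + (\<Sum>i<p. x i * (\<Sum>j<R. of_int (m (1+i*R+j)) * a j))"
proof -
  have "(\<Sum>n<p*R+1. of_int (m n) * ihdr_input p R a y x n)
      = of_int (m 0) * y + (\<Sum>n<p*R. of_int (m (Suc n)) * (x (n div R) * a (n mod R)))"
    unfolding Suc_eq_plus1[symmetric] sum.lessThan_Suc_shift by (simp add: ihdr_input_def)
  also have "(\<Sum>n<p*R. of_int (m (Suc n)) * (x (n div R) * a (n mod R)))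
     = (\<Sum>i<p. \<Sum>j<R. of_int (m (Suc (i*R+j))) * (x ((i*R+j) div R) * a ((i*R+j) mod R)))"
    by (rule sum_prod_index)
  also have "\<dots> = (\<Sum>i<p. \<Sum>j<R. of_int (m (1+i*R+j)) * (x i * a j))"
    by (intro sum.cong refl) auto
  also have "\<dots> = (\<Sum>i<p. x i * (\<Sum>j<R. of_int (m (1+i*R+j)) * a j))"
    by (simp add: sum_distrib_left mult_ac)
  finally show ?thesis .
qed


definition ccoef :: "nat \<Rightarrow> (nat \<Rightarrow> real) \<Rightarrow> (nat \<Rightarrow> real) \<Rightarrow> (nat \<Rightarrow> int) \<Rightarrow> nat \<Rightarrow> real" where
  "ccoef R a beta m i = of_int (m 0) * beta i + (\<Sum>j<R. of_int (m (1+i*R+j)) * a j)"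

lemma decode_ok:
  assumes ri: "rationally_independent a R"
    and jf: "\<forall>i<p. jf i < R \<and> beta i = a (jf i)"
    and cz: "\<forall>i<p. ccoef R a beta m i = 0"
    and nz: "\<exists>n<p*R+1. m n \<noteq> 0"
    and ip: "i < p"
  shows "ihdr_decode R a m i = beta i"
proof -
  have struct: "m (1+i'*R+j) = (if j = jf i' then - m 0 else 0)" if "i' < p" "j < R" for i' j
  proof -
    define q :: "nat \<Rightarrow> real" where "q j = of_int (m (1+i'*R+j)) + (if j = jf i' then of_int (m 0) else 0)" for j
    have "(\<Sum>j<R. q j * a j) = (\<Sum>j<R. of_int (m (1+i'*R+j)) * a j) + (\<Sum>j<R. (if j = jf i' then of_int (m 0) * a j else 0))"
    proof -
      have "q j * a j = of_int (m (1+i'*R+j)) * a j + (if j = jf i' then of_int (m 0) * a j else 0)" for j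
        unfolding q_def by (simp add: distrib_right)
      then show ?thesis by (simp only: sum.distrib)
    qed
    also have "(\<Sum>j<R. (if j = jf i' then of_int (m 0) * a j else 0)) = of_int (m 0) * beta i'"
      using jf that by (simp add: sum.delta)
    finally have "(\<Sum>j<R. q j * a j) = ccoef R a beta m i'" unfolding ccoef_def by simp
    with cz that have "(\<Sum>j<R. q j * a j) = 0" by simp
    moreover have "\<forall>j<R. q j \<in> \<rat>" unfolding q_def by auto
    ultimately have "q j = 0" using ri that unfolding rationally_independent_def by blast
    then show ?thesis unfolding q_def by (auto split: if_splits)
  qed
  have m0: "m 0 \<noteq> 0"
  proof
    assume m00: "m 0 = 0"
    obtain n where n: "n < p*R+1" "m n \<noteq> 0" using nz by blast
    with m00 have "n \<noteq> 0" by (metis)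
    then have "n - 1 < p * R" using n by simp
    then have Rp: "R > 0" by (cases "R = 0") auto
    define i' where "i' = (n-1) div R"
    define j where "j = (n-1) mod R"
    have "i' < p" unfolding i'_def using \<open>n - 1 < p * R\<close> Rp
      by (simp add: div_less_iff_less_mult)
    moreover have "j < R" unfolding j_def using Rp by simp
    moreover have "n = 1 + i'*R + j" unfolding i'_def j_def using \<open>n \<noteq> 0\<close>
      by (metis One_nat_def Suc_pred add.commute add.left_commute bot_nat_0.not_eq_extremum div_mult_mod_eq plus_1_eq_Suc)
    ultimately show False using struct m00 n(2) by (auto split: if_splits)
  qed
  have "(LEAST j. j < R \<and> m (1 + i * R + j) \<noteq> 0) = jf i"
    by (rule Least_equality) (use jf ip struct m0 in \<open>auto simp: not_le split: if_splits\<close>)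
  then show ?thesis unfolding ihdr_decode_def using m0 jf ip by simp
qed


lemma relation_sum:
  "(\<Sum>n<p*R+1. of_int (m n) * ihdr_input p R a (\<Sum>i<p. x i * beta i) x n)
     = (\<Sum>i<p. x i * ccoef R a beta m i)"
  unfolding input_sum ccoef_def by (simp add: sum_distrib_left distrib_left sum.distrib mult_ac)

theorem theorem5:
  fixes M :: "'w measure" and X :: "'w \<Rightarrow> nat \<Rightarrow> real"
    and f :: "(nat \<Rightarrow> real) \<Rightarrow> ennreal"
    and p R :: nat and a beta :: "nat \<Rightarrow> real"
    and ira :: "(nat \<Rightarrow> real) \<Rightarrow> nat \<Rightarrow> (nat \<Rightarrow> int)"
    and ira_cost :: "(nat \<Rightarrow> real) \<Rightarrow> nat \<Rightarrow> real" and C :: real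
  assumes "prob_space M"
    and "distributed M (PiM {..<p} (\<lambda>_. lborel)) X f"
    and "rationally_independent a R"
    and "\<forall>i<p. \<exists>j<R. beta i = a j"
    and "0 < C" and "is_IRA ira ira_cost C"
  shows "(AE \<omega> in M. \<forall>i<p.
            ihdr ira p R a (\<Sum>i<p. X \<omega> i * beta i) (X \<omega>) i = beta i)
       \<and> (\<forall>\<omega>\<in>space M.
            ihdr_cost ira_cost p R a (\<Sum>i<p. X \<omega> i * beta i) (X \<omega>)
              \<le> (2 * C + 2) * real (p * R + 1) ^ 3)"
proof -
  let ?N = "PiM {..<p} (\<lambda>_. lborel :: real measure)"
  define k where "k = p*R+1"
  obtain jf where jf: "\<forall>i<p. jf i < R \<and> beta i = a (jf i)"
    using assms(4) by metis
  define b where "b \<omega> = ihdr_input p R a (\<Sum>i<p. X \<omega> i * beta i) (X \<omega>)" for \<omega>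
  define mstar :: "nat \<Rightarrow> int" where
    "mstar n = (if n = 0 then -1 else if (n-1) mod R = jf ((n-1) div R) then 1 else 0)" for n
  have cstar: "ccoef R a beta mstar i = 0" if "i < p" for i
  proof -
    have "(\<Sum>j<R. of_int (mstar (1+i*R+j)) * a j) = (\<Sum>j<R. if j = jf i then a j else 0)"
      by (intro sum.cong refl) (auto simp: mstar_def)
    also have "\<dots> = beta i" using jf that by (simp add: sum.delta)
    finally show ?thesis unfolding ccoef_def by (simp add: mstar_def)
  qed
  have rel_star: "is_int_relation (b \<omega>) k mstar" for \<omega>
  proof -
    have "(\<Sum>i<p. X \<omega> i * ccoef R a beta mstar i) = 0" by (simp add: cstar)
    moreover have "mstar 0 \<noteq> 0" by (simp add: mstar_def)
    ultimately show ?thesis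
      unfolding is_int_relation_def k_def b_def relation_sum by auto
  qed
  have has_rel: "has_int_relation (b \<omega>) k" for \<omega>
    using rel_star unfolding has_int_relation_def by blast
  have ira_rel: "is_int_relation (b \<omega>) k (ira (b \<omega>) k)" for \<omega>
    using assms(6) has_rel unfolding is_IRA_def by blast
  define Q where "Q \<omega> m \<longleftrightarrow> (\<forall>i<p. ccoef R a beta m i = 0) \<or> (\<Sum>i<p. X \<omega> i * ccoef R a beta m i) \<noteq> 0"
    for \<omega> m
  have Xm: "X \<in> measurable M ?N" and fm: "f \<in> borel_measurable ?N"
    and dd: "distr M ?N X = density ?N f"
    using assms(2) unfolding distributed_def by auto
  have AEQ: "AE \<omega> in M. Q \<omega> m" for m
  proof (cases "\<forall>i<p. ccoef R a beta m i = 0")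
    case True then show ?thesis unfolding Q_def by simp
  next
    case False
    then obtain i0 where i0: "i0 < p" "ccoef R a beta m i0 \<noteq> 0" by blast
    let ?c = "ccoef R a beta m"
    have meas: "{x \<in> space ?N. \<not> (\<Sum>i<p. x i * ?c i) \<noteq> 0} \<in> sets ?N" by measurable
    have "AE x in ?N. (\<Sum>i<p. x i * ?c i) \<noteq> 0"
      using hyperplane_null[of i0 p ?c, OF i0] meas by (subst AE_iff_null[OF meas]) (simp add: null_sets_def)
    then have "AE x in density ?N f. (\<Sum>i<p. x i * ?c i) \<noteq> 0"
      by (subst AE_density[OF fm]) auto
    then have "AE x in distr M ?N X. (\<Sum>i<p. x i * ?c i) \<noteq> 0" by (simp only: dd)
    then have "AE \<omega> in M. (\<Sum>i<p. X \<omega> i * ?c i) \<noteq> 0"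
      by (subst (asm) AE_distr_iff[OF Xm]) (use meas in \<open>auto simp: Collect_neg_eq Diff_eq[symmetric]\<close>)
    then show ?thesis unfolding Q_def by (auto elim: eventually_mono)
  qed
  have cnt: "countable (PiE {..<k} (\<lambda>_. UNIV :: int set))"
    by (rule countable_PiE) auto
  have "AE \<omega> in M. \<forall>m\<in>PiE {..<k} (\<lambda>_. UNIV :: int set). Q \<omega> m"
    using AEQ cnt by (intro AE_ball_countable') auto
  then have part1: "AE \<omega> in M. \<forall>i<p. ihdr ira p R a (\<Sum>i<p. X \<omega> i * beta i) (X \<omega>) i = beta i"
  proof (rule eventually_mono)
    fix \<omega> assume H: "\<forall>m\<in>PiE {..<k} (\<lambda>_. UNIV :: int set). Q \<omega> m"
    define m where "m = ira (b \<omega>) k"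
    have rel: "is_int_relation (b \<omega>) k m" using ira_rel unfolding m_def .
    have "Q \<omega> (restrict m {..<k})" using H by auto
    moreover have "ccoef R a beta (restrict m {..<k}) i = ccoef R a beta m i" if "i < p" for i
      unfolding ccoef_def using idx_lt[OF that] by (auto simp: k_def intro!: sum.cong)
    ultimately have Qm: "Q \<omega> m" unfolding Q_def by auto
    have "(\<Sum>i<p. X \<omega> i * ccoef R a beta m i) = 0"
      using rel unfolding is_int_relation_def b_def k_def relation_sum by simp
    then have cz: "\<forall>i<p. ccoef R a beta m i = 0" using Qm unfolding Q_def by auto
    have nz: "\<exists>n<p*R+1. m n \<noteq> 0" using rel unfolding is_int_relation_def k_def by simp
    show "\<forall>i<p. ihdr ira p R a (\<Sum>i<p. X \<omega> i * beta i) (X \<omega>) i = beta i"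
      using decode_ok[OF assms(3) jf cz nz] unfolding ihdr_def m_def b_def k_def by simp
  qed
  have part2: "ihdr_cost ira_cost p R a (\<Sum>i<p. X \<omega> i * beta i) (X \<omega>)
              \<le> (2 * C + 2) * real (p * R + 1) ^ 3" for \<omega>
  proof -
    define S where "S = {sqrt (\<Sum>i<k. (of_int (m i))\<^sup>2) | m. is_int_relation (b \<omega>) k m}"
    have ge1: "s \<ge> 1" if "s \<in> S" for s
    proof -
      from that obtain m where sm: "s = sqrt (\<Sum>i<k. (real_of_int (m i))\<^sup>2)" and r: "is_int_relation (b \<omega>) k m"
        unfolding S_def by blast
      from r obtain i where i: "i < k" "m i \<noteq> 0" unfolding is_int_relation_def by blast
      have a: "(1::int) \<le> \<bar>m i\<bar>" using i(2) by linarith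
      have "(1::int) * 1 \<le> \<bar>m i\<bar> * \<bar>m i\<bar>" by (rule mult_mono[OF a a]) auto
      then have "(1::int) \<le> (m i)\<^sup>2" by (simp add: power2_eq_square)
      then have "1 \<le> (real_of_int (m i))\<^sup>2" by (metis of_int_1_le_iff of_int_power)
      also have "\<dots> \<le> (\<Sum>i<k. (real_of_int (m i))\<^sup>2)"
        by (rule member_le_sum) (use i in auto)
      finally show ?thesis unfolding sm by simp
    qed
    have sstar: "sqrt (\<Sum>i<k. (real_of_int (mstar i))\<^sup>2) \<in> S" unfolding S_def using rel_star by blast
    have "(\<Sum>i<k. (real_of_int (mstar i))\<^sup>2) \<le> (\<Sum>i<k. 1)"
      by (intro sum_mono) (auto simp: mstar_def)
    then have "sqrt (\<Sum>i<k. (real_of_int (mstar i))\<^sup>2) \<le> sqrt (real k)" by simp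
    also have "\<dots> \<le> real k"
    proof -
      have k1: "1 \<le> real k" by (simp add: k_def)
      have "real k \<le> (real k)\<^sup>2" using k1 by (simp add: power2_eq_square)
      then have "sqrt (real k) \<le> sqrt ((real k)\<^sup>2)" by (simp only: real_sqrt_le_iff)
      then show ?thesis by simp
    qed
    finally have sk: "sqrt (\<Sum>i<k. (real_of_int (mstar i))\<^sup>2) \<le> real k" .
    have bdd: "bdd_below S" using ge1 by (intro bdd_belowI[of _ 1]) auto
    have "Inf S \<le> real k" using cInf_lower[OF sstar bdd] sk by simp
    moreover have "1 \<le> Inf S" using sstar ge1 by (intro cInf_greatest) auto
    ultimately have L: "ln (min_relation_norm (b \<omega>) k) \<le> real k"
      unfolding min_relation_norm_def S_def[symmetric]
      using ln_le_minus_one[of "Inf S"] by simp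
    have ic: "ira_cost (b \<omega>) k \<le> C * (real k ^ 3 + (real k)\<^sup>2 * ln (min_relation_norm (b \<omega>) k))"
      using assms(6) has_rel unfolding is_IRA_def by blast
    have "(real k)\<^sup>2 * ln (min_relation_norm (b \<omega>) k) \<le> (real k)\<^sup>2 * real k"
      by (rule mult_left_mono[OF L]) simp
    then have "ira_cost (b \<omega>) k \<le> C * (2 * real k ^ 3)"
      using ic assms(5) by (smt (verit) mult_left_mono power3_eq_cube power2_eq_square)
    moreover have "real (p*R) \<le> real k ^ 3"
    proof -
      have "real (p*R) \<le> real k" by (simp add: k_def)
      also have "\<dots> \<le> real k ^ 3" using k_def by (simp add: self_le_power)
      finally show ?thesis .
    qed
    ultimately show ?thesis
      unfolding ihdr_cost_def b_def[symmetric] k_def[symmetric] by (simp add: algebra_simps)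
  qed
  show ?thesis using part1 part2 by blast
qed

end
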